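(* Let $W$ be an sc-Banach space, $E=\mathbb R^n\oplus W$, $C=[0,\infty)^n\oplus W$, and let $N\subset E_\infty$ be a finite-dimensional linear subspace such that $C\cap N$ is a closed convex cone. If $a\in C\cap N$ is nonzero and generates an extreme ray of $C\cap N$, then $\dim(N)-1\le\sharp\sigma_a$. If, in addition, $N$ is in good position to $C$, then $\dim(N)-1=\sharp\sigma_a$.
   Context: An sc-Banach space is a Banach space $W$ with nested Banach spaces $W=W_0\supset W_1\supset\cdots$, compact inclusions $W_n\to W_m$ ($m<n$), $W_\infty=\bigcap W_m$ dense in each $W_m$; $E$ has levels $E_m=\mathbb R^n\oplus W_m$, $E_\infty=\mathbb R^n\oplus W_\infty$, and $\|\cdot\|$ is the level-$0$ norm. For $a=(a_1,\dots,a_n,a_\infty)\in C$, $\sigma_a=\{i\in\{1,\dots,n\}: a_i=0\}$. A closed convex cone is a closed convex set $P$ with $P\cap(-P)=\{0\}$ and $\mathbb R^+P=P$; an extreme ray is $\mathbb R^+x$, $x\in P\setminus\{0\}$, such that $y\in P$, $x-y\in P$ imply $y\in\mathbb R^+x$. An sc-complement of $N$ is a closed subspace $N^\perp$ with $E_m=(N\cap E_m)\oplus(N^\perp\cap E_m)$ topologically for all $m$, both pieces sc-subspaces. $N$ is in good position to $C$ if $N\cap C$ has nonempty interior in $N$ and there are an sc-complement $N^\perp$ and $c>0$ such that for $(n,m)\in N\oplus N^\perp$ with $\|m\|\le c\|n\|$: $n+m\in C$ iff $n\in C$. *)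

theory Defs
  imports "HOL-Analysis.Analysis"
begin

definition sc_banach :: "(nat \<Rightarrow> 'w::banach set) \<Rightarrow> (nat \<Rightarrow> 'w \<Rightarrow> real) \<Rightarrow> bool" where
  "sc_banach Wl nl \<longleftrightarrow>
     Wl 0 = UNIV \<and> (\<forall>w. nl 0 w = norm w) \<and>
     (\<forall>m. subspace (Wl m)) \<and>
     (\<forall>m. \<forall>v\<in>Wl m. \<forall>w\<in>Wl m. nl m (v + w) \<le> nl m v + nl m w) \<and>
     (\<forall>m. \<forall>w\<in>Wl m. \<forall>c. nl m (c *\<^sub>R w) = \<bar>c\<bar> * nl m w) \<and>
     (\<forall>m. \<forall>w\<in>Wl m. 0 \<le> nl m w \<and> (nl m w = 0 \<longleftrightarrow> w = 0)) \<and>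
     \<comment> \<open>each level is complete\<close>
     (\<forall>m (s::nat \<Rightarrow> 'w). (\<forall>k. s k \<in> Wl m) \<and>
          (\<forall>e>0. \<exists>K. \<forall>i\<ge>K. \<forall>j\<ge>K. nl m (s i - s j) < e)
        \<longrightarrow> (\<exists>l\<in>Wl m. (\<lambda>k. nl m (s k - l)) \<longlonglongrightarrow> 0)) \<and>
     \<comment> \<open>nested\<close>
     (\<forall>m. Wl (Suc m) \<subseteq> Wl m) \<and>
     \<comment> \<open>compact inclusions W_k \<rightarrow> W_m for m < k: bounded sequences have convergent subsequences\<close>
     (\<forall>m k (s::nat \<Rightarrow> 'w) B. m < k \<and> (\<forall>i. s i \<in> Wl k \<and> nl k (s i) \<le> B)
        \<longrightarrow> (\<exists>r l. strict_mono r \<and> l \<in> Wl m \<and> (\<lambda>i. nl m (s (r i) - l)) \<longlonglongrightarrow> 0)) \<and>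
     \<comment> \<open>W_infinity dense in every level\<close>
     (\<forall>m. \<forall>w\<in>Wl m. \<forall>e>0. \<exists>v\<in>(\<Inter>j. Wl j). nl m (w - v) < e)"

definition Elev :: "(nat \<Rightarrow> 'w set) \<Rightarrow> nat \<Rightarrow> ((real^'n) \<times> 'w) set" where
  "Elev Wl m = {p. snd p \<in> Wl m}"

definition Einf :: "(nat \<Rightarrow> 'w set) \<Rightarrow> ((real^'n) \<times> 'w) set" where
  "Einf Wl = {p. snd p \<in> (\<Inter>m. Wl m)}"

definition Enorm :: "(nat \<Rightarrow> 'w \<Rightarrow> real) \<Rightarrow> nat \<Rightarrow> (real^'n) \<times> 'w::real_normed_vector \<Rightarrow> real" where
  "Enorm nl m p = norm (fst p) + nl m (snd p)"

definition Cquad :: "((real^'n) \<times> 'w) set" where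
  "Cquad = {p. \<forall>i. 0 \<le> fst p $ i}"

definition sigma :: "(real^'n) \<times> 'w \<Rightarrow> 'n set" where
  "sigma a = {i. fst a $ i = 0}"

definition closed_convex_cone :: "'a::real_normed_vector set \<Rightarrow> bool" where
  "closed_convex_cone P \<longleftrightarrow> closed P \<and> convex P \<and> P \<inter> uminus ` P = {0} \<and>
      {t *\<^sub>R x | t x. t \<ge> 0 \<and> x \<in> P} = P"

definition extreme_ray :: "'a::real_vector set \<Rightarrow> 'a \<Rightarrow> bool" where
  "extreme_ray P x \<longleftrightarrow> x \<in> P \<and> x \<noteq> 0 \<and>
     (\<forall>y. y \<in> P \<and> x - y \<in> P \<longrightarrow> (\<exists>t\<ge>0. y = t *\<^sub>R x))"

text \<open>sc-subspace: F closed linear subspace of E such that F_m = F \<inter> E_m is closed in E_m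
  and F_\<infinity> is dense in each F_m (so that F_m defines an sc-structure on F).\<close>

definition sc_subspace :: "(nat \<Rightarrow> 'w::real_normed_vector set) \<Rightarrow> (nat \<Rightarrow> 'w \<Rightarrow> real)
     \<Rightarrow> ((real^'n) \<times> 'w) set \<Rightarrow> bool" where
  "sc_subspace Wl nl F \<longleftrightarrow> subspace F \<and> closed F \<and>
     (\<forall>m (s::nat \<Rightarrow> (real^'n) \<times> 'w) l. (\<forall>k. s k \<in> F \<inter> Elev Wl m) \<and> l \<in> Elev Wl m \<and>
         (\<lambda>k. Enorm nl m (s k - l)) \<longlonglongrightarrow> 0 \<longrightarrow> l \<in> F) \<and>
     (\<forall>m. \<forall>p\<in>F \<inter> Elev Wl m. \<forall>e>0. \<exists>q\<in>F \<inter> Einf Wl. Enorm nl m (p - q) < e)"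

text \<open>M is an sc-complement of N: closed subspace with E_m = (N \<inter> E_m) + (M \<inter> E_m)
  a topological direct sum for every m (algebraically direct, and the projection onto
  N \<inter> E_m continuous, i.e. bounded, for the level-m norm), both pieces sc-subspaces.\<close>

definition sc_complement :: "(nat \<Rightarrow> 'w::real_normed_vector set) \<Rightarrow> (nat \<Rightarrow> 'w \<Rightarrow> real)
     \<Rightarrow> ((real^'n) \<times> 'w) set \<Rightarrow> ((real^'n) \<times> 'w) set \<Rightarrow> bool" where
  "sc_complement Wl nl N M \<longleftrightarrow> subspace M \<and> closed M \<and>
     sc_subspace Wl nl N \<and> sc_subspace Wl nl M \<and>
     (\<forall>m. N \<inter> M \<inter> Elev Wl m = {0} \<and>
          (\<forall>p\<in>Elev Wl m. \<exists>u\<in>N \<inter> Elev Wl m. \<exists>v\<in>M \<inter> Elev Wl m. p = u + v) \<and>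
          (\<exists>K. \<forall>u\<in>N \<inter> Elev Wl m. \<forall>v\<in>M \<inter> Elev Wl m. Enorm nl m u \<le> K * Enorm nl m (u + v)))"

text \<open>Good position of N to C (norm = level-0 norm, interior taken relative to N).\<close>

definition good_position :: "(nat \<Rightarrow> 'w::real_normed_vector set) \<Rightarrow> (nat \<Rightarrow> 'w \<Rightarrow> real)
     \<Rightarrow> ((real^'n) \<times> 'w) set \<Rightarrow> bool" where
  "good_position Wl nl N \<longleftrightarrow>
     (\<exists>x\<in>N \<inter> Cquad. \<exists>e>0. \<forall>y\<in>N. Enorm nl 0 (y - x) < e \<longrightarrow> y \<in> Cquad) \<and>
     (\<exists>M c. sc_complement Wl nl N M \<and> c > 0 \<and>
        (\<forall>u\<in>N. \<forall>v\<in>M. Enorm nl 0 v \<le> c * Enorm nl 0 u \<longrightarrow> (u + v \<in> Cquad \<longleftrightarrow> u \<in> Cquad)))"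

end

theory Submission
  imports Defs
begin

lemma indep_le_dim:
  fixes V :: "'a::real_vector set"
  assumes "independent B" "B \<subseteq> V" "V \<subseteq> span B0" "finite B0"
  shows "card B \<le> dim V"
proof -
  obtain C where C: "B \<subseteq> C" "C \<subseteq> V" "independent C" "V \<subseteq> span C"
    using maximal_independent_subset_extend[OF assms(2,1)] by blast
  have fC: "finite C" using independent_span_bound[OF assms(4) C(3)] C(2) assms(3) by blast
  have "card C = dim V" using basis_card_eq_dim C by blast
  then show ?thesis using card_mono[OF fC C(1)] by simp
qed

lemma rank_nullity_fin:
  fixes f :: "'a::real_vector \<Rightarrow> 'b::real_vector"
  assumes lf: "linear f" and S: "subspace S" and SB0: "S \<subseteq> span B0" and fB0: "finite B0"
  shows "dim S = dim (f ` S) + dim {x\<in>S. f x = 0}"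
proof -
  define K where "K = {x\<in>S. f x = 0}"
  have sK: "subspace K" unfolding K_def subspace_def
    using S lf by (auto simp: subspace_def linear_add linear_scale linear_0)
  obtain BK where BK: "BK \<subseteq> K" "independent BK" "K \<subseteq> span BK" "card BK = dim K"
    using basis_exists by blast
  have "BK \<subseteq> S" using BK(1) K_def by auto
  then obtain B where B: "BK \<subseteq> B" "B \<subseteq> S" "independent B" "S \<subseteq> span B"
    using maximal_independent_subset_extend[OF _ BK(2)] by blast
  have fB: "finite B" using independent_span_bound[OF fB0 B(3)] B(2) SB0 by blast
  have cB: "card B = dim S" using basis_card_eq_dim B by blast
  define C where "C = B - BK"
  have fC: "finite C" "finite BK" using fB B(1) C_def finite_subset by auto
  have BCK: "B = C \<union> BK" "C \<inter> BK = {}" using B(1) C_def by auto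
  have cC: "card C = card B - card BK" using C_def B(1) fB by (simp add: card_Diff_subset finite_subset)
  have f0: "\<And>v. v \<in> BK \<Longrightarrow> f v = 0" using BK(1) K_def by auto
  have spanB: "span B = S" using B(2,4) S by (simp add: span_subspace)
  have img: "f ` S = span (f ` C)"
  proof -
    have "f ` S = span (f ` B)" using linear_span_image[OF lf, of B] spanB by simp
    also have "f ` B = f ` C \<union> f ` BK" using BCK by auto
    also have "span (f ` C \<union> f ` BK) = span (f ` C)"
    proof (cases "BK = {}")
      case True then show ?thesis by simp
    next
      case False
      then have "f ` BK = {0}" using f0 by auto
      then show ?thesis by (metis span_insert_0 Un_insert_right sup_bot.right_neutral)
    qed
    finally show ?thesis .
  qed
  have inj: "inj_on f (span C)"
  proof -
    have "\<forall>x\<in>span C. f x = 0 \<longrightarrow> x = 0"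
    proof (intro ballI impI)
      fix x assume xC: "x \<in> span C" and fx: "f x = 0"
      have "x \<in> S" using xC B(2) C_def S span_minimal by blast
      then have "x \<in> span BK" using fx BK(3) K_def by auto
      then obtain d where d: "x = (\<Sum>v\<in>BK. d v *\<^sub>R v)" using span_finite[OF fC(2)] by auto
      obtain c where c: "x = (\<Sum>v\<in>C. c v *\<^sub>R v)" using span_finite[OF fC(1)] xC by auto
      define u where "u v = (if v \<in> C then c v else - d v)" for v
      have "(\<Sum>v\<in>B. u v *\<^sub>R v) = (\<Sum>v\<in>C. u v *\<^sub>R v) + (\<Sum>v\<in>BK. u v *\<^sub>R v)"
        using BCK fC by (simp add: sum.union_disjoint)
      also have "(\<Sum>v\<in>C. u v *\<^sub>R v) = x" using c u_def by simp
      also have "(\<Sum>v\<in>BK. u v *\<^sub>R v) = - x" using d u_def BCK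
        by (auto simp: sum_negf[symmetric] intro!: sum.cong)
      finally have "(\<Sum>v\<in>B. u v *\<^sub>R v) = 0" by simp
      then have "\<And>v. v \<in> C \<Longrightarrow> c v = 0"
        using independentD[OF B(3) fB order_refl] u_def BCK by fastforce
      then show "x = 0" using c by simp
    qed
    then show ?thesis using linear_inj_on_iff_eq_0[OF lf subspace_span] by blast
  qed
  have indC: "independent C" using B(3) C_def independent_mono by blast
  have ind: "independent (f ` C)" using linear_independent_injective_image[OF lf indC inj] .
  have "inj_on f C" using inj span_superset inj_on_subset by blast
  then have "dim (f ` S) = card C" using img dim_span_eq_card_independent[OF ind] card_image by metis
  then show ?thesis using cC cB BK(4) K_def card_mono[OF fB B(1)] by simp
qed


theorem lemma6p5:
  fixes Wl :: "nat \<Rightarrow> 'w::banach set" and nl :: "nat \<Rightarrow> 'w \<Rightarrow> real"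
    and N :: "((real^'n) \<times> 'w) set" and a :: "(real^'n) \<times> 'w"
  assumes "sc_banach Wl nl"
    and "subspace N" and "\<exists>B. finite B \<and> N = span B"
    and "N \<subseteq> Einf Wl"
    and "closed_convex_cone (Cquad \<inter> N)"
    and "a \<in> Cquad \<inter> N" and "a \<noteq> 0"
    and "extreme_ray (Cquad \<inter> N) a"
  shows "dim N - 1 \<le> card (sigma a)
         \<and> (good_position Wl nl N \<longrightarrow> dim N - 1 = card (sigma a))"
proof -
  note sc = assms(1) and subN = assms(2) and aC = assms(6) and a0 = assms(7) and ext = assms(8)
  obtain B0 where fB0: "finite B0" and NB0: "N = span B0" using assms(3) by blast
  have NspB: "N \<subseteq> span B0" using NB0 by simp
  define \<sigma> where "\<sigma> = sigma a"
  have fsig: "finite \<sigma>" by simp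
  have ageq: "\<And>i. 0 \<le> fst a $ i" using aC by (simp add: Cquad_def)
  have apos: "\<And>i. i \<notin> \<sigma> \<Longrightarrow> 0 < fst a $ i"
    using ageq by (simp add: \<sigma>_def sigma_def less_le)
  have azero: "\<And>i. i \<in> \<sigma> \<Longrightarrow> fst a $ i = 0" by (simp add: \<sigma>_def sigma_def)
  define L :: "(real^'n) \<times> 'w \<Rightarrow> real^'n" where
    "L x = (\<chi> i. if i \<in> \<sigma> then fst x $ i else 0)" for x
  have lin: "linear L"
    by (rule linearI) (auto simp: L_def vec_eq_iff)
  define S :: "(real^'n) set" where "S = {\<xi>. \<forall>i. i \<notin> \<sigma> \<longrightarrow> \<xi> $ i = 0}"
  define d :: "(real^'n) set" where "d = (\<lambda>i. axis i 1) ` \<sigma>"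
  have dB: "d \<subseteq> Basis" by (auto simp: d_def Basis_vec_def)
  have Seq: "S = {x. \<forall>i\<in>Basis. i \<notin> d \<longrightarrow> x \<bullet> i = 0}"
    by (auto simp: S_def d_def Basis_vec_def inner_axis axis_eq_axis)
  have cd: "card d = card \<sigma>"
    unfolding d_def by (rule card_image) (auto simp: inj_on_def axis_eq_axis)
  have dimS: "dim S = card \<sigma>" using dim_substandard[OF dB] Seq cd by simp
  define K where "K = {x\<in>N. L x = 0}"
  have rn: "dim N = dim (L ` N) + dim K"
    unfolding K_def by (rule rank_nullity_fin[OF lin subN NspB fB0])
  have LNS: "L ` N \<subseteq> S" by (auto simp: L_def S_def)
  have aK: "a \<in> K" using aC by (auto simp: K_def L_def vec_eq_iff azero)
  have Kspan: "K \<subseteq> span {a}"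
  proof
    fix x assume xK: "x \<in> K"
    then have xN: "x \<in> N" and x0: "\<And>i. i \<in> \<sigma> \<Longrightarrow> fst x $ i = 0"
      by (auto simp: K_def L_def vec_eq_iff split: if_splits)
    define t where "t = Min (insert 1 ((\<lambda>i. fst a $ i / (\<bar>fst x $ i\<bar> + 1)) ` (- \<sigma>)))"
    have tpos: "t > 0" unfolding t_def
      by (subst Min_gr_iff) (auto intro!: divide_pos_pos apos)
    have tb: "t * \<bar>fst x $ i\<bar> \<le> fst a $ i" if "i \<notin> \<sigma>" for i
    proof -
      have "t \<le> fst a $ i / (\<bar>fst x $ i\<bar> + 1)" unfolding t_def using that by (intro Min_le) auto
      then have "t * (\<bar>fst x $ i\<bar> + 1) \<le> fst a $ i" by (simp add: pos_le_divide_eq add_pos_nonneg)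
      then have "t * \<bar>fst x $ i\<bar> + t \<le> fst a $ i" by (simp add: distrib_left)
      then show ?thesis using tpos by linarith
    qed
    have inC: "(1/2) *\<^sub>R (a + s *\<^sub>R x) \<in> Cquad" if "\<bar>s\<bar> = t" for s
      unfolding Cquad_def
    proof (clarsimp)
      fix i
      show "0 \<le> fst a $ i + s * fst x $ i"
      proof (cases "i \<in> \<sigma>")
        case True then show ?thesis using azero x0 by simp
      next
        case False
        have "\<bar>s * fst x $ i\<bar> \<le> fst a $ i" using tb[OF False] that by (simp add: abs_mult)
        then show ?thesis by linarith
      qed
    qed
    have inN: "(1/2) *\<^sub>R (a + s *\<^sub>R x) \<in> N" for s
      using subN aC xN by (simp add: subspace_add subspace_scale)
    define y where "y = (1/2) *\<^sub>R (a + t *\<^sub>R x)"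
    have ay: "a - y = (1/2) *\<^sub>R (a + (-t) *\<^sub>R x)" unfolding y_def by (simp add: algebra_simps flip: scaleR_add_left)
    have "y \<in> Cquad \<inter> N" "a - y \<in> Cquad \<inter> N"
      using inC[of t] inC[of "-t"] inN[of t] inN[of "-t"] tpos ay unfolding y_def by auto
    then obtain q where "y = q *\<^sub>R a" using ext unfolding extreme_ray_def by blast
    then have "2 *\<^sub>R y = (2 * q) *\<^sub>R a" by simp
    moreover have "2 *\<^sub>R y = a + t *\<^sub>R x" unfolding y_def by simp
    ultimately have "a + t *\<^sub>R x = (2 * q) *\<^sub>R a" by simp
    then have "t *\<^sub>R x = (2 * q) *\<^sub>R a - a" by (simp add: algebra_simps)
    then have "t *\<^sub>R x = (2 * q - 1) *\<^sub>R a" by (simp add: scaleR_diff_left)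
    then have "inverse t *\<^sub>R (t *\<^sub>R x) = inverse t *\<^sub>R ((2 * q - 1) *\<^sub>R a)" by simp
    then have "x = (inverse t * (2 * q - 1)) *\<^sub>R a" using tpos by simp
    then show "x \<in> span {a}" by (simp add: span_scale span_base)
  qed
  have dimK1: "dim K \<le> 1" using dim_le_card[OF Kspan] by simp
  have "dim (L ` N) \<le> card \<sigma>" using dim_subset[OF LNS] dimS by simp
  then have part1: "dim N - 1 \<le> card \<sigma>" using rn dimK1 by linarith
  have KN: "K \<subseteq> span B0" using NspB K_def by auto
  have dimK: "1 \<le> dim K" using indep_le_dim[of "{a}" K B0] aK a0 KN fB0 by auto
  have part2: "card \<sigma> \<le> dim N - 1" if gp: "good_position Wl nl N"
  proof -
    obtain M c where scM: "sc_complement Wl nl N M" and c0: "c > 0" and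
      gpM: "\<forall>u\<in>N. \<forall>v\<in>M. Enorm nl 0 v \<le> c * Enorm nl 0 u \<longrightarrow> (u + v \<in> Cquad \<longleftrightarrow> u \<in> Cquad)"
      using gp unfolding good_position_def by blast
    have subM: "subspace M" using scM unfolding sc_complement_def by blast
    have W0: "Wl 0 = UNIV" and n0: "\<And>w. nl 0 w = norm w" using sc unfolding sc_banach_def by auto
    have En: "\<And>p. Enorm nl 0 p = norm (fst p) + norm (snd p)" by (simp add: Enorm_def n0)
    have Ensc: "Enorm nl 0 (r *\<^sub>R p) = \<bar>r\<bar> * Enorm nl 0 p" for r p
      by (simp add: En algebra_simps)
    have Ea: "Enorm nl 0 a > 0"
    proof -
      have "fst a \<noteq> 0 \<or> snd a \<noteq> 0" using a0 by (simp add: prod_eq_iff)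
      then show ?thesis by (auto simp: En add_pos_nonneg add_nonneg_pos)
    qed
    have ge: "0 \<le> fst w $ i" if wM: "w \<in> M" and i: "i \<in> \<sigma>" for w i
    proof -
      define r where "r = c * Enorm nl 0 a / (Enorm nl 0 w + 1)"
      have Ew: "Enorm nl 0 w \<ge> 0" by (simp add: En)
      have rpos: "r > 0" unfolding r_def using c0 Ea Ew by simp
      have "r * (Enorm nl 0 w + 1) = c * Enorm nl 0 a" unfolding r_def using Ew by simp
      then have "r * Enorm nl 0 w \<le> c * Enorm nl 0 a" using rpos by (simp add: distrib_left)
      then have "Enorm nl 0 (r *\<^sub>R w) \<le> c * Enorm nl 0 a" using Ensc[of r w] rpos by simp
      moreover have "r *\<^sub>R w \<in> M" using subM wM by (simp add: subspace_scale)
      ultimately have "a + r *\<^sub>R w \<in> Cquad" using gpM aC by blast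
      then have "0 \<le> fst a $ i + r * fst w $ i" by (simp add: Cquad_def)
      then have "0 \<le> r * fst w $ i" using azero[OF i] by simp
      then show ?thesis using rpos by (simp add: zero_le_mult_iff)
    qed
    have Mz: "fst v $ i = 0" if "v \<in> M" "i \<in> \<sigma>" for v i
      using ge[OF that] ge[of "-v" i] that subM by (simp add: subspace_neg)
    have "S \<subseteq> L ` N"
    proof
      fix \<xi> assume xi: "\<xi> \<in> S"
      have "(\<xi>, 0::'w) \<in> Elev Wl 0" by (simp add: Elev_def W0)
      then obtain u v where u: "u \<in> N" and v: "v \<in> M" and p: "(\<xi>, 0) = u + v"
        using scM unfolding sc_complement_def by blast
      have "L u = \<xi>"
      proof (subst vec_eq_iff, intro allI)
        fix i
        have "\<xi> $ i = fst u $ i + fst v $ i" using p by (metis fst_add fst_conv vector_add_component)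
        then show "L u $ i = \<xi> $ i" using Mz[OF v, of i] xi by (auto simp: L_def S_def)
      qed
      then show "\<xi> \<in> L ` N" using u by blast
    qed
    then have "dim S \<le> dim (L ` N)" by (rule dim_subset)
    then show ?thesis using dimS rn dimK by linarith
  qed
  show ?thesis using part1 part2 unfolding \<sigma>_def by auto
qed

end
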